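(* Consider the $\lambda$-SAGA algorithm (defined in the context) with fixed $\lambda\in[0,1]$. Write it as $X_{n+1}=X_n-\gamma_n(\nabla f(X_n)+\varepsilon_{n+1})$. Assume each $\nabla f_k$ is continuous, $\nabla f(x^* )=0$, and $\lim_{n\to\infty}X_n=x^*$ almost surely. Then $(\varepsilon_n)$ is a martingale difference sequence with respect to $(\mathcal F_n)$, for every $k$ one has $\phi_{n,k}\to x^*$ almost surely, and $$\lim_{n\to\infty}\mathbb E[\varepsilon_{n+1}\varepsilon_{n+1}^T\mid\mathcal F_n]=(1-\lambda)^2\,\Gamma\quad\text{a.s.},\qquad \Gamma=\frac1N\sum_{k=1}^N\nabla f_k(x^* )\big(\nabla f_k(x^* )\big)^T.$$
   Context: Let $N,d\ge1$ be integers, $f_1,\dots,f_N:\mathbb R^d\to\mathbb R$ differentiable, and $f=\frac1N\sum_{k=1}^N f_k$. The $\lambda$-SAGA algorithm with parameter $\lambda\in[0,1]$ and positive deterministic steps $(\gamma_n)_{n\ge1}$: let $X_0,X_1$ be square-integrable random vectors in $\mathbb R^d$ and $(U_n)_{n\ge2}$ i.i.d. uniform on $\{1,\dots,N\}$, independent of $(X_0,X_1)$. Set $g_{1,k}=\nabla f_k(X_0)$ for $k=1,\dots,N$ and for $n\ge1$: $X_{n+1}=X_n-\gamma_n\Big(\nabla f_{U_{n+1}}(X_n)-\lambda\big(g_{n,U_{n+1}}-\frac1N\sum_{k=1}^N g_{n,k}\big)\Big)$, and $g_{n+1,k}=\nabla f_k(X_n)$ if $U_{n+1}=k$, $g_{n+1,k}=g_{n,k}$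 otherwise. Let $\mathcal F_n=\sigma(X_0,X_1,U_2,\dots,U_n)$. Define $\phi_{n,k}$ by $\phi_{1,k}=X_0$, $\phi_{n+1,k}=X_n$ if $U_{n+1}=k$ and $\phi_{n+1,k}=\phi_{n,k}$ otherwise (so $g_{n,k}=\nabla f_k(\phi_{n,k})$). Thus $\varepsilon_{n+1}=\big(\nabla f_{U_{n+1}}(X_n)-\nabla f(X_n)\big)-\lambda\big(g_{n,U_{n+1}}-\frac1N\sum_{k}g_{n,k}\big)$.
   Formalization: The martingale difference property of $(\varepsilon_n)$ omits integrability of $\varepsilon_{n+1}$: it means $\varepsilon_{n+1}$ is $\mathcal F_{n+1}$-measurable with generalized conditional expectation zero given $\mathcal F_n$, the difference of those of its positive and negative parts. The statement above fails without it. *)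

theory Defs
  imports "HOL-Analysis.Analysis" "HOL-Probability.Probability"
begin

text \<open>State of lambda-SAGA. saga_state G N lam gam X0 X1 U m w = (X_(m+1), phi_(m+1)),
  where phi_n k is the point at which the stored gradient g_(n,k) = G k (phi_n k) was computed.
  G k is the gradient of f_k; gam n = gamma_n; U n is the index drawn at step n (n >= 2).\<close>

primrec saga_state ::
  "(nat \<Rightarrow> real^'d \<Rightarrow> real^'d) \<Rightarrow> nat \<Rightarrow> real \<Rightarrow> (nat \<Rightarrow> real) \<Rightarrow>
   ('a \<Rightarrow> real^'d) \<Rightarrow> ('a \<Rightarrow> real^'d) \<Rightarrow> (nat \<Rightarrow> 'a \<Rightarrow> nat) \<Rightarrow> nat \<Rightarrow> 'a \<Rightarrow>
   ((real^'d) \<times> (nat \<Rightarrow> real^'d))" where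
  "saga_state G N lam gam X0 X1 U 0 w = (X1 w, \<lambda>k. X0 w)"
| "saga_state G N lam gam X0 X1 U (Suc m) w =
     (let (x, \<phi>) = saga_state G N lam gam X0 X1 U m w;
          u = U (m + 2) w
      in (x - gam (Suc m) *\<^sub>R (G u x - lam *\<^sub>R (G u (\<phi> u)
                 - (1 / real N) *\<^sub>R (\<Sum>k=1..N. G k (\<phi> k)))),
          \<lambda>k. if u = k then x else \<phi> k))"

definition saga_X where
  "saga_X G N lam gam X0 X1 U n w =
     (if n = 0 then X0 w else fst (saga_state G N lam gam X0 X1 U (n - 1) w))"

text \<open>phi_(n,k) for n >= 1.\<close>
definition saga_phi where
  "saga_phi G N lam gam X0 X1 U n k w = snd (saga_state G N lam gam X0 X1 U (n - 1) w) k"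

text \<open>The noise eps_(n+1) for n >= 1 (here saga_eps ... n = eps_(n+1)), with
  grad f(x) = (1/N) sum_k G k x.\<close>
definition saga_eps where
  "saga_eps G N lam gam X0 X1 U n w =
     (let x = saga_X G N lam gam X0 X1 U n w; u = U (n + 1) w;
          \<phi> = (\<lambda>k. saga_phi G N lam gam X0 X1 U n k w)
      in (G u x - (1 / real N) *\<^sub>R (\<Sum>k=1..N. G k x))
         - lam *\<^sub>R (G u (\<phi> u) - (1 / real N) *\<^sub>R (\<Sum>k=1..N. G k (\<phi> k))))"

definition saga_filt :: "'a measure \<Rightarrow> ('a \<Rightarrow> real^'d) \<Rightarrow> ('a \<Rightarrow> real^'d) \<Rightarrow>
    (nat \<Rightarrow> 'a \<Rightarrow> nat) \<Rightarrow> nat \<Rightarrow> 'a measure" where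
  "saga_filt M X0 X1 U n = sigma (space M)
     ({(\<lambda>w. (X0 w, X1 w)) -` A \<inter> space M | A. A \<in> sets borel}
      \<union> (\<Union>i\<in>{2..n}. {U i -` A \<inter> space M | A. A \<in> sets (count_space UNIV)}))"

end

theory Submission
  imports Defs
begin



lemma nn_ind:
  assumes fm: "finite_measure M" and sub: "subalgebra M F" and S: "S \<in> sets M"
    and c: "c \<ge> 0" and eq: "\<And>A. A \<in> sets F \<Longrightarrow> measure M (S \<inter> A) = c * measure M A"
    and g: "g \<in> borel_measurable F"
  shows "(\<integral>\<^sup>+x. indicator S x * g x \<partial>M) = ennreal c * (\<integral>\<^sup>+x. g x \<partial>M)"
  using g
proof (induction rule: borel_measurable_induct)
  case (cong f g)
  have sp: "space F = space M" using sub by (simp add: subalgebra_def)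
  have "(\<integral>\<^sup>+x. indicator S x * f x \<partial>M) = (\<integral>\<^sup>+x. indicator S x * g x \<partial>M)"
    by (rule nn_integral_cong) (use cong.hyps(3) sp in auto)
  moreover have "(\<integral>\<^sup>+x. f x \<partial>M) = (\<integral>\<^sup>+x. g x \<partial>M)"
    by (rule nn_integral_cong) (use cong.hyps(3) sp in auto)
  ultimately show ?case using cong.IH by simp
next
  case (set A)
  have AM: "A \<in> sets M" using set sub by (auto simp: subalgebra_def)
  have "(\<integral>\<^sup>+x. indicator S x * indicator A x \<partial>M) = (\<integral>\<^sup>+x. indicator (S \<inter> A) x \<partial>M)"
    by (simp add: indicator_inter_arith)
  also have "\<dots> = emeasure M (S \<inter> A)" using AM S by simp
  also have "\<dots> = ennreal (measure M (S \<inter> A))"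
    using fm by (simp add: finite_measure.emeasure_eq_measure)
  also have "\<dots> = ennreal c * ennreal (measure M A)" using eq[OF set] c by (simp add: ennreal_mult)
  also have "\<dots> = ennreal c * emeasure M A"
    using fm by (simp add: finite_measure.emeasure_eq_measure)
  finally show ?case using AM by simp
next
  case (mult u c')
  have um: "u \<in> borel_measurable M" using measurable_from_subalg[OF sub mult.hyps(2)] .
  have "(\<integral>\<^sup>+x. indicator S x * (c' * u x) \<partial>M) = (\<integral>\<^sup>+x. c' * (indicator S x * u x) \<partial>M)"
    by (simp add: mult.left_commute)
  also have "\<dots> = c' * (\<integral>\<^sup>+x. indicator S x * u x \<partial>M)"
    by (rule nn_integral_cmult) (use um S in auto)
  also have "\<dots> = c' * (ennreal c * (\<integral>\<^sup>+x. u x \<partial>M))" using mult.IH by simp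
  also have "\<dots> = ennreal c * (c' * (\<integral>\<^sup>+x. u x \<partial>M))" by (simp add: mult.left_commute)
  also have "c' * (\<integral>\<^sup>+x. u x \<partial>M) = (\<integral>\<^sup>+x. c' * u x \<partial>M)"
    by (rule nn_integral_cmult[symmetric]) (use um in auto)
  finally show ?case .
next
  case (add u v)
  have um: "u \<in> borel_measurable M" using measurable_from_subalg[OF sub add.hyps(1)] .
  have vm: "v \<in> borel_measurable M" using measurable_from_subalg[OF sub add.hyps(3)] .
  have "(\<integral>\<^sup>+x. indicator S x * (v x + u x) \<partial>M) = (\<integral>\<^sup>+x. indicator S x * v x + indicator S x * u x \<partial>M)"
    by (simp add: distrib_left)
  also have "\<dots> = (\<integral>\<^sup>+x. indicator S x * v x \<partial>M) + (\<integral>\<^sup>+x. indicator S x * u x \<partial>M)"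
    by (rule nn_integral_add) (use um vm S in auto)
  also have "\<dots> = ennreal c * ((\<integral>\<^sup>+x. v x \<partial>M) + (\<integral>\<^sup>+x. u x \<partial>M))"
    using add.IH by (simp add: distrib_left)
  also have "(\<integral>\<^sup>+x. v x \<partial>M) + (\<integral>\<^sup>+x. u x \<partial>M) = (\<integral>\<^sup>+x. v x + u x \<partial>M)"
    by (rule nn_integral_add[symmetric]) (use um vm in auto)
  finally show ?case .
next
  case (seq V)
  have Vm: "\<And>i. V i \<in> borel_measurable M" using measurable_from_subalg[OF sub seq.hyps(1)] .
  have inc2: "incseq (\<lambda>i x. indicator S x * V i x)"
    using seq.hyps(3) by (auto simp: incseq_def le_fun_def intro!: mult_left_mono)
  have "(\<integral>\<^sup>+x. indicator S x * (SUP i. V i) x \<partial>M) = (\<integral>\<^sup>+x. (SUP i. indicator S x * V i x) \<partial>M)"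
    by (simp add: SUP_mult_left_ennreal image_comp)
  also have "\<dots> = (SUP i. (\<integral>\<^sup>+x. indicator S x * V i x \<partial>M))"
    by (rule nn_integral_monotone_convergence_SUP) (use inc2 Vm S in auto)
  also have "\<dots> = (SUP i. ennreal c * (\<integral>\<^sup>+x. V i x \<partial>M))" using seq.IH by simp
  also have "\<dots> = ennreal c * (SUP i. (\<integral>\<^sup>+x. V i x \<partial>M))" by (simp add: SUP_mult_left_ennreal)
  also have "(SUP i. (\<integral>\<^sup>+x. V i x \<partial>M)) = (\<integral>\<^sup>+x. (SUP i. V i x) \<partial>M)"
    by (rule nn_integral_monotone_convergence_SUP[symmetric]) (use seq.hyps(3) Vm in auto)
  finally show ?case by (simp add: image_comp)
qed




lemma ennreal_max0: "ennreal x = ennreal (max x 0)"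
  by (cases "x \<ge> 0") (auto simp: ennreal_neg max_def)

lemma cond_key_nn:
  assumes fm: "finite_measure M" and sub: "subalgebra M F" and N: "N \<ge> 1"
   and Um: "U \<in> measurable M (count_space {1..N})"
   and ind: "\<And>A k. A \<in> sets F \<Longrightarrow> k \<in> {1..N} \<Longrightarrow>
        measure M ({w\<in>space M. U w = k} \<inter> A) = (1/real N) * measure M A"
   and h: "\<And>k. k \<in> {1..N} \<Longrightarrow> h k \<in> borel_measurable F"
  shows "AE w in M. ennreal (1/real N) * (\<Sum>k=1..N. h k w) = nn_cond_exp M F (\<lambda>w. h (U w) w) w"
proof -
  interpret finite_measure_subalgebra M F
    using fm sub by (simp add: finite_measure_subalgebra_def finite_measure_subalgebra_axioms_def)
  have hM: "h k \<in> borel_measurable M" if "k \<in> {1..N}" for k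
    using measurable_from_subalg[OF sub h[OF that]] .
  have Sk: "{w\<in>space M. U w = k} \<in> sets M" for k
  proof -
    have "{w\<in>space M. U w = k} = U -` ({k} \<inter> {1..N}) \<inter> space M"
      using measurable_space[OF Um] by auto
    also have "\<dots> \<in> sets M" by (rule measurable_sets[OF Um]) auto
    finally show ?thesis .
  qed
  have hUM: "(\<lambda>w. h (U w) w) \<in> borel_measurable M"
    by (rule measurable_compose_countable'[OF hM Um]) auto
  show ?thesis
  proof (rule nn_cond_exp_charact)
    fix A assume A: "A \<in> sets F"
    have AM: "A \<in> sets M" using A sub by (auto simp: subalgebra_def)
    have "(\<integral>\<^sup>+x\<in>A. h (U x) x \<partial>M) =
        (\<integral>\<^sup>+x. (\<Sum>k\<in>{1..N}. indicator {w\<in>space M. U w = k} x * (h k x * indicator A x)) \<partial>M)"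
    proof (rule nn_integral_cong)
      fix x assume x: "x \<in> space M"
      have Ux: "U x \<in> {1..N}" using measurable_space[OF Um x] by simp
      have "(\<Sum>k\<in>{1..N}. indicator {w\<in>space M. U w = k} x * (h k x * indicator A x))
          = (\<Sum>k\<in>{1..N}. if U x = k then h k x * indicator A x else 0)"
        by (rule sum.cong) (auto simp: indicator_def x)
      also have "\<dots> = h (U x) x * indicator A x" using Ux by (simp add: sum.delta)
      finally show "h (U x) x * indicator A x =
          (\<Sum>k\<in>{1..N}. indicator {w\<in>space M. U w = k} x * (h k x * indicator A x))" by simp
    qed
    also have "\<dots> = (\<Sum>k\<in>{1..N}. (\<integral>\<^sup>+x. indicator {w\<in>space M. U w = k} x * (h k x * indicator A x) \<partial>M))"
      by (rule nn_integral_sum) (use hM AM Sk in auto)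
    also have "\<dots> = (\<Sum>k\<in>{1..N}. ennreal (1/real N) * (\<integral>\<^sup>+x. h k x * indicator A x \<partial>M))"
    proof (rule sum.cong[OF refl])
      fix k assume k: "k \<in> {1..N}"
      show "(\<integral>\<^sup>+x. indicator {w\<in>space M. U w = k} x * (h k x * indicator A x) \<partial>M) =
          ennreal (1/real N) * (\<integral>\<^sup>+x. h k x * indicator A x \<partial>M)"
        by (rule nn_ind[OF fm sub Sk]) (use ind[OF _ k] h[OF k] A in auto)
    qed
    also have "\<dots> = ennreal (1/real N) * (\<Sum>k\<in>{1..N}. (\<integral>\<^sup>+x. h k x * indicator A x \<partial>M))"
      by (simp add: sum_distrib_left)
    also have "(\<Sum>k\<in>{1..N}. (\<integral>\<^sup>+x. h k x * indicator A x \<partial>M)) = (\<integral>\<^sup>+x. (\<Sum>k\<in>{1..N}. h k x * indicator A x) \<partial>M)"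
      by (rule nn_integral_sum[symmetric]) (use hM AM in auto)
    also have "ennreal (1/real N) * \<dots> = (\<integral>\<^sup>+x. ennreal (1/real N) * (\<Sum>k\<in>{1..N}. h k x * indicator A x) \<partial>M)"
      by (rule nn_integral_cmult[symmetric]) (use hM AM in auto)
    also have "\<dots> = (\<integral>\<^sup>+x\<in>A. ennreal (1/real N) * (\<Sum>k=1..N. h k x) \<partial>M)"
      by (simp add: sum_distrib_right mult.assoc)
    finally show "(\<integral>\<^sup>+x\<in>A. h (U x) x \<partial>M) = (\<integral>\<^sup>+x\<in>A. ennreal (1/real N) * (\<Sum>k=1..N. h k x) \<partial>M)" .
  next
    show "(\<lambda>w. h (U w) w) \<in> borel_measurable M" by (fact hUM)
    show "(\<lambda>w. ennreal (1/real N) * (\<Sum>k=1..N. h k w)) \<in> borel_measurable F"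
      using h by measurable
  qed
qed

lemma cond_key:
  assumes fm: "finite_measure M" and sub: "subalgebra M F" and N: "N \<ge> 1"
   and Um: "U \<in> measurable M (count_space {1..N})"
   and ind: "\<And>A k. A \<in> sets F \<Longrightarrow> k \<in> {1..N} \<Longrightarrow>
        measure M ({w\<in>space M. U w = k} \<inter> A) = (1/real N) * measure M A"
   and a: "\<And>k. k \<in> {1..N} \<Longrightarrow> a k \<in> borel_measurable F"
  shows "AE w in M. real_cond_exp M F (\<lambda>w. a (U w) w) w = (1/real N) * (\<Sum>k=1..N. a k w)"
proof -
  have 1: "AE w in M. ennreal (1/real N) * (\<Sum>k=1..N. ennreal (a k w)) = nn_cond_exp M F (\<lambda>w. ennreal (a (U w) w)) w"
    by (rule cond_key_nn[OF fm sub N Um ind, of "\<lambda>k w. ennreal (a k w)"]) (use a in auto)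
  have 2: "AE w in M. ennreal (1/real N) * (\<Sum>k=1..N. ennreal (- a k w)) = nn_cond_exp M F (\<lambda>w. ennreal (- a (U w) w)) w"
    by (rule cond_key_nn[OF fm sub N Um ind, of "\<lambda>k w. ennreal (- a k w)"]) (use a in auto)
  show ?thesis
    using 1 2
  proof eventually_elim
    case (elim w)
    have e1: "enn2real (ennreal (1/real N) * (\<Sum>k=1..N. ennreal (a k w))) = (1/real N) * (\<Sum>k=1..N. max (a k w) 0)"
    proof -
      have "(\<Sum>k=1..N. ennreal (a k w)) = (\<Sum>k=1..N. ennreal (max (a k w) 0))"
        by (rule sum.cong[OF refl]) (rule ennreal_max0)
      also have "\<dots> = ennreal (\<Sum>k=1..N. max (a k w) 0)" by (rule sum_ennreal) simp
      finally show ?thesis by (simp add: enn2real_mult sum_nonneg)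
    qed
    have e2: "enn2real (ennreal (1/real N) * (\<Sum>k=1..N. ennreal (- a k w))) = (1/real N) * (\<Sum>k=1..N. max (- a k w) 0)"
    proof -
      have "(\<Sum>k=1..N. ennreal (- a k w)) = (\<Sum>k=1..N. ennreal (max (- a k w) 0))"
        by (rule sum.cong[OF refl]) (rule ennreal_max0)
      also have "\<dots> = ennreal (\<Sum>k=1..N. max (- a k w) 0)" by (rule sum_ennreal) simp
      finally show ?thesis by (simp add: enn2real_mult sum_nonneg)
    qed
    have "(\<Sum>k=1..N. max (a k w) 0) - (\<Sum>k=1..N. max (- a k w) 0) = (\<Sum>k=1..N. a k w)"
      by (simp add: sum_subtractf[symmetric] max_def) (rule sum.cong, auto)
    then show ?case using e1 e2 elim
      unfolding real_cond_exp_def by (simp add: diff_divide_distrib[symmetric])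
  qed
qed




lemma Int_stable_pre: "Int_stable {f -` A \<inter> S | A. A \<in> sets K}"
proof (rule Int_stableI)
  fix a b assume "a \<in> {f -` A \<inter> S | A. A \<in> sets K}" "b \<in> {f -` A \<inter> S | A. A \<in> sets K}"
  then obtain A1 A2 where "A1 \<in> sets K" "A2 \<in> sets K"
    "a = f -` A1 \<inter> S" "b = f -` A2 \<inter> S" by blast
  then show "a \<inter> b \<in> {f -` A \<inter> S | A. A \<in> sets K}"
    by (intro CollectI exI[of _ "A1 \<inter> A2"]) auto
qed

locale saga_loc =
  fixes M :: "'a measure" and G :: "nat \<Rightarrow> real^'d \<Rightarrow> real^'d"
    and N :: nat and lam :: real and gam :: "nat \<Rightarrow> real"
    and X0 X1 :: "'a \<Rightarrow> real^'d" and U :: "nat \<Rightarrow> 'a \<Rightarrow> nat"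
  assumes P: "prob_space M"
    and N: "N \<ge> 1"
    and grad_cont: "\<And>k. k \<in> {1..N} \<Longrightarrow> continuous_on UNIV (G k)"
    and X0_meas: "X0 \<in> borel_measurable M"
    and X1_meas: "X1 \<in> borel_measurable M"
    and U_meas: "\<And>n. n \<ge> 2 \<Longrightarrow> U n \<in> measurable M (count_space {1..N})"
    and U_unif: "\<And>n k. n \<ge> 2 \<Longrightarrow> k \<in> {1..N} \<Longrightarrow>
                   measure M {w \<in> space M. U n w = k} = 1 / real N"
    and indep: "prob_space.indep_sets M
        (\<lambda>i. if i = 0 then {(\<lambda>w. (X0 w, X1 w)) -` A \<inter> space M | A. A \<in> sets borel}
              else {U i -` A \<inter> space M | A. A \<in> sets (count_space UNIV)})
        (insert 0 {2..})"
begin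

sublocale prob_space M by (rule P)

definition E :: "nat \<Rightarrow> 'a set set" where
  "E i = (if i = 0 then {(\<lambda>w. (X0 w, X1 w)) -` A \<inter> space M | A. A \<in> sets borel}
              else {U i -` A \<inter> space M | A. A \<in> sets (count_space UNIV)})"

abbreviation F where "F n \<equiv> saga_filt M X0 X1 U n"

lemma indepE: "indep_sets E (insert 0 {2..})"
  using indep unfolding E_def .

lemma E_sets: "i \<in> insert 0 {2..} \<Longrightarrow> E i \<subseteq> sets M"
  using indepE unfolding indep_sets_def by blast

lemma E_pow: "E i \<subseteq> Pow (space M)"
  unfolding E_def by auto

lemma gen_eq: "({(\<lambda>w. (X0 w, X1 w)) -` A \<inter> space M | A. A \<in> sets borel}
      \<union> (\<Union>i\<in>{2..n}. {U i -` A \<inter> space M | A. A \<in> sets (count_space UNIV)}))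
    = (\<Union>i\<in>insert 0 {2..n}. E i)"
proof -
  have "(\<Union>i\<in>{2..n}. E i) = (\<Union>i\<in>{2..n}. {U i -` A \<inter> space M | A. A \<in> sets (count_space UNIV)})"
    by (rule SUP_cong) (auto simp: E_def)
  moreover have "E 0 = {(\<lambda>w. (X0 w, X1 w)) -` A \<inter> space M | A. A \<in> sets borel}" by (simp add: E_def)
  ultimately show ?thesis by (simp only: UN_insert)
qed

lemma gen_pow: "(\<Union>i\<in>insert 0 {2..n}. E i) \<subseteq> Pow (space M)"
  using E_pow by blast

lemma F_eq: "F n = sigma (space M) (\<Union>i\<in>insert 0 {2..n}. E i)"
  unfolding saga_filt_def gen_eq ..

lemma sets_F: "sets (F n) = sigma_sets (space M) (\<Union>i\<in>insert 0 {2..n}. E i)"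
  unfolding F_eq by (rule sets_measure_of[OF gen_pow])

lemma space_F: "space (F n) = space M"
  unfolding F_eq by (rule space_measure_of[OF gen_pow])

lemma subalg: "subalgebra M (F n)"
proof -
  have "(\<Union>i\<in>insert 0 {2..n}. E i) \<subseteq> sets M" by (intro UN_least E_sets) auto
  then show ?thesis unfolding subalgebra_def space_F sets_F
    by (simp add: sets.sigma_sets_subset)
qed

lemma subalg_F: "n \<le> m \<Longrightarrow> subalgebra (F m) (F n)"
  unfolding subalgebra_def space_F sets_F
  by (intro conjI refl sigma_sets_subseteq) auto

lemma E_in_F: "i \<in> insert 0 {2..n} \<Longrightarrow> B \<in> E i \<Longrightarrow> B \<in> sets (F n)"
  unfolding sets_F by (rule sigma_sets.Basic) blast

lemma U_F: assumes "2 \<le> i" "i \<le> n" shows "U i \<in> measurable (F n) (count_space {1..N})"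
proof (subst measurable_count_space_eq2)
  show "finite {1..N}" by simp
  show "U i \<in> space (F n) \<rightarrow> {1..N} \<and> (\<forall>a\<in>{1..N}. U i -` {a} \<inter> space (F n) \<in> sets (F n))"
  proof
    show "U i \<in> space (F n) \<rightarrow> {1..N}" using measurable_space[OF U_meas[OF assms(1)]] space_F by auto
    show "\<forall>a\<in>{1..N}. U i -` {a} \<inter> space (F n) \<in> sets (F n)"
    proof
      fix a assume "a \<in> {1..N}"
      have "U i -` {a} \<inter> space M \<in> E i" using assms unfolding E_def by auto
      then show "U i -` {a} \<inter> space (F n) \<in> sets (F n)" unfolding space_F
        by (rule E_in_F[rotated]) (use assms in auto)
    qed
  qed
qed

lemma pair_F: "(\<lambda>w. (X0 w, X1 w)) \<in> borel_measurable (F n)"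
proof (rule measurableI)
  fix A :: "((real^'d) \<times> (real^'d)) set" assume "A \<in> sets borel"
  then have "(\<lambda>w. (X0 w, X1 w)) -` A \<inter> space M \<in> E 0" unfolding E_def by auto
  then show "(\<lambda>w. (X0 w, X1 w)) -` A \<inter> space (F n) \<in> sets (F n)" unfolding space_F
    by (rule E_in_F[rotated]) auto
qed auto

lemma X0_F: "X0 \<in> borel_measurable (F n)"
proof -
  have "(\<lambda>w. fst (X0 w, X1 w)) \<in> borel_measurable (F n)"
    by (rule measurable_compose[OF pair_F borel_measurable_continuous_onI]) (intro continuous_intros)
  then show ?thesis by simp
qed

lemma X1_F: "X1 \<in> borel_measurable (F n)"
proof -
  have "(\<lambda>w. snd (X0 w, X1 w)) \<in> borel_measurable (F n)"
    by (rule measurable_compose[OF pair_F borel_measurable_continuous_onI]) (intro continuous_intros)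
  then show ?thesis by simp
qed

lemma G_meas: "k \<in> {1..N} \<Longrightarrow> G k \<in> borel_measurable borel"
  by (rule borel_measurable_continuous_onI[OF grad_cont])

lemma indep_F:
  assumes n: "1 \<le> n" and A: "A \<in> sets (F n)" and B: "B \<in> E (n+1)"
  shows "prob (A \<inter> B) = prob A * prob B"
proof -
  define I where "I = (\<lambda>b::bool. if b then insert 0 {2..n} else {n+1})"
  have U: "(\<Union>j. I j) \<subseteq> insert 0 {2..}" using n by (auto simp: I_def)
  have ind: "indep_sets E (\<Union>j. I j)"
    by (rule indep_sets_mono_index[OF U indepE])
  have st: "Int_stable (E i)" for i
    unfolding E_def by (simp only: split: if_split) (blast intro: Int_stable_pre)
  have disj: "disjoint_family_on I UNIV"
    unfolding disjoint_family_on_def I_def by auto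
  have ind2: "indep_sets (\<lambda>j. sigma_sets (space M) (\<Union>i\<in>I j. E i)) UNIV"
    by (rule indep_sets_collect_sigma[OF ind]) (use st disj in auto)
  define C where "C = (\<lambda>b::bool. if b then A else B)"
  have "prob (\<Inter>j\<in>UNIV. C j) = (\<Prod>j\<in>UNIV. prob (C j))"
  proof (rule indep_setsD[OF ind2])
    show "\<forall>j\<in>UNIV. C j \<in> sigma_sets (space M) (\<Union>i\<in>I j. E i)"
    proof
      fix j :: bool
      show "C j \<in> sigma_sets (space M) (\<Union>i\<in>I j. E i)"
      proof (cases j)
        case True then show ?thesis using A unfolding C_def I_def sets_F by simp
      next
        case False then show ?thesis using B unfolding C_def I_def by (auto intro: sigma_sets.Basic)
      qed
    qed
  qed auto
  moreover have "(\<Inter>j\<in>UNIV. C j) = A \<inter> B" unfolding C_def by (auto simp: UNIV_bool)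
  moreover have "(\<Prod>j\<in>UNIV. prob (C j)) = prob A * prob B" unfolding C_def by (simp add: UNIV_bool)
  ultimately show ?thesis by simp
qed

lemma indep_U:
  assumes n: "1 \<le> n" and A: "A \<in> sets (F n)" and k: "k \<in> {1..N}"
  shows "measure M ({w\<in>space M. U (n+1) w = k} \<inter> A) = (1/real N) * measure M A"
proof -
  have B: "{w\<in>space M. U (n+1) w = k} \<in> E (n+1)"
    unfolding E_def by (auto intro!: exI[of _ "{k}"])
  have "measure M ({w\<in>space M. U (n+1) w = k} \<inter> A) = prob (A \<inter> {w\<in>space M. U (n+1) w = k})"
    by (simp add: Int_commute)
  also have "\<dots> = prob A * prob {w\<in>space M. U (n+1) w = k}" by (rule indep_F[OF n A B])
  also have "prob {w\<in>space M. U (n+1) w = k} = 1 / real N" using U_unif[OF _ k, of "n+1"] n by simp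
  finally show ?thesis by simp
qed

end




lemma borel_measurable_vec_nth: "(f :: 'a \<Rightarrow> real^'n) \<in> borel_measurable M \<Longrightarrow> (\<lambda>w. f w $ i) \<in> borel_measurable M"
  by (rule measurable_compose[of f M borel "\<lambda>x. x $ i", OF _ borel_measurable_continuous_onI])
     (auto intro: linear_continuous_on bounded_linear_vec_nth)

context saga_loc
begin

definition Xs where "Xs m w = fst (saga_state G N lam gam X0 X1 U m w)"
definition Ph where "Ph m k w = snd (saga_state G N lam gam X0 X1 U m w) k"

lemma Xs_0: "Xs 0 = X1" by (rule ext) (simp add: Xs_def)
lemma Ph_0: "Ph 0 k = X0" by (rule ext) (simp add: Ph_def)
lemma Xs_Suc: "Xs (Suc m) w = Xs m w - gam (Suc m) *\<^sub>R (G (U (m+2) w) (Xs m w) - lam *\<^sub>R (G (U (m+2) w) (Ph m (U (m+2) w) w)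
        - (1/real N) *\<^sub>R (\<Sum>k=1..N. G k (Ph m k w))))"
  unfolding Xs_def Ph_def by (simp add: Let_def case_prod_beta)
lemma Ph_Suc: "Ph (Suc m) k w = (if U (m+2) w = k then Xs m w else Ph m k w)"
  unfolding Xs_def Ph_def by (simp add: Let_def case_prod_beta)

lemma fm: "finite_measure M" by unfold_locales

lemma meas: "m + 1 \<le> n \<Longrightarrow> Xs m \<in> borel_measurable (F n) \<and> (\<forall>k. Ph m k \<in> borel_measurable (F n))"
proof (induction m arbitrary: n)
  case 0
  then show ?case by (simp add: Xs_0 Ph_0 X0_F X1_F)
next
  case (Suc m)
  then have IH: "Xs m \<in> borel_measurable (F n)" "\<And>k. Ph m k \<in> borel_measurable (F n)" by auto
  have UF: "U (m+2) \<in> measurable (F n) (count_space {1..N})"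
    by (rule U_F) (use Suc.prems in auto)
  have g1: "(\<lambda>w. G (U (m+2) w) (Xs m w)) \<in> borel_measurable (F n)"
    by (rule measurable_compose_countable'[OF _ UF]) (auto intro: measurable_compose[OF IH(1) G_meas])
  have g2: "(\<lambda>w. G (U (m+2) w) (Ph m (U (m+2) w) w)) \<in> borel_measurable (F n)"
    by (rule measurable_compose_countable'[OF _ UF, where f="\<lambda>i w. G i (Ph m i w)"])
       (auto intro: measurable_compose[OF IH(2) G_meas])
  have g3: "(\<lambda>w. \<Sum>k=1..N. G k (Ph m k w)) \<in> borel_measurable (F n)"
    by (rule borel_measurable_sum) (auto intro: measurable_compose[OF IH(2) G_meas])
  have "(\<lambda>w. Xs m w - gam (Suc m) *\<^sub>R (G (U (m+2) w) (Xs m w) - lam *\<^sub>R (G (U (m+2) w) (Ph m (U (m+2) w) w)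
        - (1/real N) *\<^sub>R (\<Sum>k=1..N. G k (Ph m k w))))) \<in> borel_measurable (F n)"
    by (intro borel_measurable_diff borel_measurable_scaleR borel_measurable_const g1 g2 g3 IH)
  then have X: "Xs (Suc m) \<in> borel_measurable (F n)" by (simp add: Xs_Suc[abs_def])
  have "Ph (Suc m) k \<in> borel_measurable (F n)" for k
  proof -
    have S: "{w \<in> space (F n). U (m+2) w = k} \<in> sets (F n)"
    proof -
      have "{w \<in> space (F n). U (m+2) w = k} = U (m+2) -` ({k} \<inter> {1..N}) \<inter> space (F n)"
        using measurable_space[OF UF] by auto
      also have "\<dots> \<in> sets (F n)" by (rule measurable_sets[OF UF]) auto
      finally show ?thesis .
    qed
    have "(\<lambda>w. if U (m+2) w = k then Xs m w else Ph m k w) \<in> borel_measurable (F n)"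
      by (rule measurable_If[OF IH(1) IH(2) S])
    then show ?thesis by (simp add: Ph_Suc[abs_def])
  qed
  with X show ?case by auto
qed

lemma X_eq: "1 \<le> n \<Longrightarrow> saga_X G N lam gam X0 X1 U n = Xs (n - 1)"
  by (rule ext) (simp add: saga_X_def Xs_def)
lemma phi_eq: "saga_phi G N lam gam X0 X1 U n k = Ph (n - 1) k"
  by (rule ext) (simp add: saga_phi_def Ph_def)

lemma X_F: "1 \<le> n \<Longrightarrow> n \<le> n' \<Longrightarrow> saga_X G N lam gam X0 X1 U n \<in> borel_measurable (F n')"
  using meas[of "n - 1" n'] by (simp add: X_eq)
lemma phi_F: "1 \<le> n \<Longrightarrow> n \<le> n' \<Longrightarrow> saga_phi G N lam gam X0 X1 U n k \<in> borel_measurable (F n')"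
  using meas[of "n - 1" n'] by (simp add: phi_eq)

lemma phi_Suc: "1 \<le> n \<Longrightarrow> saga_phi G N lam gam X0 X1 U (Suc n) k w =
   (if U (n+1) w = k then saga_X G N lam gam X0 X1 U n w else saga_phi G N lam gam X0 X1 U n k w)"
  by (cases n) (simp_all add: saga_phi_def saga_X_def Let_def case_prod_beta)

definition a_vec where
  "a_vec n u w = (let x = saga_X G N lam gam X0 X1 U n w; \<phi> = (\<lambda>k. saga_phi G N lam gam X0 X1 U n k w)
      in (G u x - (1 / real N) *\<^sub>R (\<Sum>k=1..N. G k x))
         - lam *\<^sub>R (G u (\<phi> u) - (1 / real N) *\<^sub>R (\<Sum>k=1..N. G k (\<phi> k))))"

lemma eps_eq: "saga_eps G N lam gam X0 X1 U n w = a_vec n (U (n+1) w) w"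
  by (simp add: saga_eps_def a_vec_def Let_def)

lemma a_vec_F: assumes "1 \<le> n" "n \<le> n'" "u \<in> {1..N}" shows "a_vec n u \<in> borel_measurable (F n')"
proof -
  have X: "saga_X G N lam gam X0 X1 U n \<in> borel_measurable (F n')" using X_F assms by auto
  have P: "\<And>k. saga_phi G N lam gam X0 X1 U n k \<in> borel_measurable (F n')" using phi_F assms by auto
  have G1: "\<And>k. k \<in> {1..N} \<Longrightarrow> (\<lambda>w. G k (saga_X G N lam gam X0 X1 U n w)) \<in> borel_measurable (F n')"
    by (rule measurable_compose[OF X G_meas])
  have G2: "\<And>k j. k \<in> {1..N} \<Longrightarrow> (\<lambda>w. G k (saga_phi G N lam gam X0 X1 U n j w)) \<in> borel_measurable (F n')"
    by (rule measurable_compose[OF P G_meas])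
  show ?thesis unfolding a_vec_def Let_def
    by (intro borel_measurable_diff borel_measurable_scaleR borel_measurable_const borel_measurable_sum G1 G2 assms(3)) auto
qed

lemma centered_sum: "(\<Sum>u=1..N. (h u - (1 / real N) *\<^sub>R (\<Sum>k=1..N. h k))) = (0::real^'d)"
proof -
  have c: "(\<Sum>u=1..N. (1 / real N) *\<^sub>R (v::real^'d)) = v" for v
  proof -
    have "(\<Sum>u=1..N. (1 / real N) *\<^sub>R (v::real^'d)) = real (card {1..N}) *\<^sub>R ((1 / real N) *\<^sub>R v)"
      by (rule sum_constant_scaleR)
    then show ?thesis using N by simp
  qed
  show ?thesis by (simp only: sum_subtractf c) simp
qed

lemma a_vec_sum: "(\<Sum>u=1..N. a_vec n u w) = 0"
proof -
  define x where "x = saga_X G N lam gam X0 X1 U n w"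
  define p where "p = (\<lambda>k. saga_phi G N lam gam X0 X1 U n k w)"
  have "(\<Sum>u=1..N. a_vec n u w) = (\<Sum>u=1..N. (G u x - (1 / real N) *\<^sub>R (\<Sum>k=1..N. G k x))
         - lam *\<^sub>R (G u (p u) - (1 / real N) *\<^sub>R (\<Sum>k=1..N. G k (p k))))"
    unfolding a_vec_def Let_def x_def p_def ..
  also have "\<dots> = (\<Sum>u=1..N. (G u x - (1 / real N) *\<^sub>R (\<Sum>k=1..N. G k x)))
         - lam *\<^sub>R (\<Sum>u=1..N. (G u (p u) - (1 / real N) *\<^sub>R (\<Sum>k=1..N. G k (p k))))"
    by (rule trans[OF sum_subtractf]) (simp only: scaleR_sum_right)
  also have "\<dots> = 0"
    using centered_sum[of "\<lambda>u. G u x"] centered_sum[of "\<lambda>u. G u (p u)"] by simp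
  finally show ?thesis .
qed

lemma eps_F: "1 \<le> n \<Longrightarrow> saga_eps G N lam gam X0 X1 U n \<in> borel_measurable (F (n+1))"
  unfolding eps_eq
  by (rule measurable_compose_countable'[OF _ U_F, where f="a_vec n"]) (auto intro: a_vec_F)

lemma cond_gen:
  assumes n: "1 \<le> n" and b: "\<And>u. u \<in> {1..N} \<Longrightarrow> b u \<in> borel_measurable (F n)"
  shows "AE w in M. real_cond_exp M (F n) (\<lambda>w. b (U (n+1) w) w) w = (1/real N) * (\<Sum>u=1..N. b u w)"
  by (rule cond_key[OF fm subalg N U_meas _ b]) (use n indep_U in auto)

lemma cond1: "1 \<le> n \<Longrightarrow> AE w in M. real_cond_exp M (F n) (\<lambda>w. saga_eps G N lam gam X0 X1 U n w $ i) w = 0"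
proof -
  assume n: "1 \<le> n"
  have "AE w in M. real_cond_exp M (F n) (\<lambda>w. a_vec n (U (n+1) w) w $ i) w = (1/real N) * (\<Sum>u=1..N. a_vec n u w $ i)"
    by (rule cond_gen[OF n, of "\<lambda>u w. a_vec n u w $ i"]) (use n in \<open>auto intro!: borel_measurable_vec_nth a_vec_F\<close>)
  moreover have "(\<Sum>u=1..N. a_vec n u w $ i) = 0" for w
    using a_vec_sum[of n w] by (metis sum_component zero_index)
  ultimately show ?thesis by (simp add: eps_eq)
qed

lemma cond2: "1 \<le> n \<Longrightarrow> AE w in M. real_cond_exp M (F n)
   (\<lambda>w. saga_eps G N lam gam X0 X1 U n w $ i * saga_eps G N lam gam X0 X1 U n w $ j) w
     = (1/real N) * (\<Sum>u=1..N. a_vec n u w $ i * a_vec n u w $ j)"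
proof -
  assume n: "1 \<le> n"
  have "AE w in M. real_cond_exp M (F n) (\<lambda>w. a_vec n (U (n+1) w) w $ i * a_vec n (U (n+1) w) w $ j) w
       = (1/real N) * (\<Sum>u=1..N. a_vec n u w $ i * a_vec n u w $ j)"
    by (rule cond_gen[OF n, of "\<lambda>u w. a_vec n u w $ i * a_vec n u w $ j"])
       (use n in \<open>auto intro!: borel_measurable_times borel_measurable_vec_nth a_vec_F\<close>)
  then show ?thesis by (simp add: eps_eq)
qed

end




context saga_loc
begin

lemma io:
  assumes k: "k \<in> {1..N}"
  shows "AE w in M. \<forall>M0. \<exists>m\<ge>M0. U m w = k"
proof -
  have "AE w in M. \<exists>m\<ge>M0. U m w = k" for M0
  proof -
    define M1 where "M1 = max M0 2"
    define D where "D m = {w\<in>space M. U m w \<noteq> k}" for m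
    have DE: "D m \<in> E m" if "m \<ge> 2" for m
      using that unfolding D_def E_def by (auto intro!: exI[of _ "UNIV - {k}"])
    have Dsets: "D m \<in> sets M" if "m \<ge> 2" for m
      using E_sets[of m] DE[OF that] that by auto
    have pD: "prob (D m) = 1 - 1 / real N" if "m \<ge> 2" for m
    proof -
      have S: "{w\<in>space M. U m w = k} \<in> sets M"
      proof -
        have "{w\<in>space M. U m w = k} = U m -` ({k}) \<inter> space M" by auto
        also have "\<dots> \<in> sets M" by (rule measurable_sets[OF U_meas[OF that]]) (use k in auto)
        finally show ?thesis .
      qed
      have "D m = space M - {w\<in>space M. U m w = k}" unfolding D_def by auto
      then show ?thesis using prob_compl[OF S] U_unif[OF that k] by simp
    qed
    define B where "B = (\<Inter>m\<in>{M1..}. D m)"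
    have Bsets: "B \<in> sets M"
      unfolding B_def by (rule sets.countable_INT') (auto simp: M1_def intro!: Dsets)
    have bound: "measure M B \<le> (1 - 1 / real N) ^ (L + 1)" for L
    proof -
      have "B \<subseteq> (\<Inter>m\<in>{M1..M1+L}. D m)" unfolding B_def by auto
      then have "measure M B \<le> prob (\<Inter>m\<in>{M1..M1+L}. D m)"
        by (intro finite_measure_mono) (auto simp: M1_def intro!: sets.finite_INT Dsets)
      also have "prob (\<Inter>m\<in>{M1..M1+L}. D m) = (\<Prod>m\<in>{M1..M1+L}. prob (D m))"
        by (rule indep_setsD[OF indepE]) (auto simp: M1_def intro!: DE)
      also have "\<dots> = (\<Prod>m\<in>{M1..M1+L}. (1 - 1 / real N))"
        by (rule prod.cong) (auto simp: M1_def intro!: pD)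
      also have "\<dots> = (1 - 1 / real N) ^ (L + 1)" by simp
      finally show ?thesis .
    qed
    have q: "0 \<le> 1 - 1 / real N" "1 - 1 / real N < 1" using N by auto
    have lim: "(\<lambda>L. (1 - 1 / real N) ^ (L + 1)) \<longlonglongrightarrow> 0"
    proof -
      have "(\<lambda>L. (1 - 1 / real N) ^ L) \<longlonglongrightarrow> 0" by (rule LIMSEQ_power_zero) (use q in auto)
      from LIMSEQ_Suc[OF this] show ?thesis by simp
    qed
    have "measure M B \<le> 0"
      by (rule LIMSEQ_le_const[OF lim]) (use bound in auto)
    then have "emeasure M B = 0" using Bsets by (simp add: emeasure_eq_measure measure_nonneg antisym)
    then have null: "B \<in> null_sets M" using Bsets by auto
    show ?thesis
    proof (rule AE_I'[OF null])
      show "{w \<in> space M. \<not> (\<exists>m\<ge>M0. U m w = k)} \<subseteq> B"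
        unfolding B_def D_def M1_def by auto
    qed
  qed
  then show ?thesis by (simp add: AE_all_countable)
qed

lemma phi_conv:
  assumes Xc: "(\<lambda>n. saga_X G N lam gam X0 X1 U n w) \<longlonglongrightarrow> x"
    and io: "\<forall>M0. \<exists>m\<ge>M0. U m w = k"
  shows "(\<lambda>n. saga_phi G N lam gam X0 X1 U n k w) \<longlonglongrightarrow> x"
  unfolding lim_sequentially
proof (intro allI impI)
  fix e :: real assume e: "e > 0"
  from Xc e obtain M0 where M0: "\<And>m. m \<ge> M0 \<Longrightarrow> dist (saga_X G N lam gam X0 X1 U m w) x < e"
    unfolding lim_sequentially by blast
  from io obtain m' where m': "m' \<ge> M0 + 2" "U m' w = k" by blast
  have claim: "\<exists>m\<ge>M0. saga_phi G N lam gam X0 X1 U n k w = saga_X G N lam gam X0 X1 U m w" if "n \<ge> m'" for n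
    using that
  proof (induction n rule: dec_induct)
    case base
    have "m' = Suc (m' - 1)" "1 \<le> m' - 1" "m' - 1 + 1 = m'" using m' by auto
    then have "saga_phi G N lam gam X0 X1 U m' k w = saga_X G N lam gam X0 X1 U (m' - 1) w"
      using phi_Suc[of "m' - 1" k w] m'(2) by metis
    then show ?case using m' by (intro exI[of _ "m' - 1"]) auto
  next
    case (step n)
    have n1: "1 \<le> n" using step m' by auto
    show ?case
    proof (cases "U (n+1) w = k")
      case True
      then show ?thesis using phi_Suc[OF n1, of k w] step m' by (intro exI[of _ n]) auto
    next
      case False
      then show ?thesis using phi_Suc[OF n1, of k w] step by auto
    qed
  qed
  show "\<exists>no. \<forall>n\<ge>no. dist (saga_phi G N lam gam X0 X1 U n k w) x < e"
    using claim M0 by (intro exI[of _ m']) force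
qed

lemma G_cont_at: "k \<in> {1..N} \<Longrightarrow> isCont (G k) y"
  using grad_cont[of k] by (simp add: continuous_on_eq_continuous_at)

lemma lim3:
  assumes Xc: "(\<lambda>n. saga_X G N lam gam X0 X1 U n w) \<longlonglongrightarrow> xs"
    and pc: "\<And>k. k \<in> {1..N} \<Longrightarrow> (\<lambda>n. saga_phi G N lam gam X0 X1 U n k w) \<longlonglongrightarrow> xs"
    and c0: "(\<Sum>k=1..N. G k xs) = 0"
  shows "(\<lambda>n. (1/real N) * (\<Sum>u=1..N. a_vec n u w $ i * a_vec n u w $ j))
     \<longlonglongrightarrow> (1 - lam)\<^sup>2 * ((1 / real N) * (\<Sum>k=1..N. G k xs $ i * G k xs $ j))"
proof -
  have GX: "(\<lambda>n. G k (saga_X G N lam gam X0 X1 U n w)) \<longlonglongrightarrow> G k xs" if "k \<in> {1..N}" for k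
    by (rule isCont_tendsto_compose[OF G_cont_at[OF that] Xc])
  have GP: "(\<lambda>n. G k (saga_phi G N lam gam X0 X1 U n j' w)) \<longlonglongrightarrow> G k xs" if "k \<in> {1..N}" "j' \<in> {1..N}" for k j'
    by (rule isCont_tendsto_compose[OF G_cont_at[OF that(1)] pc[OF that(2)]])
  have L: "(\<lambda>n. a_vec n u w) \<longlonglongrightarrow> (G u xs - (1 / real N) *\<^sub>R (\<Sum>k=1..N. G k xs))
         - lam *\<^sub>R (G u xs - (1 / real N) *\<^sub>R (\<Sum>k=1..N. G k xs))" if u: "u \<in> {1..N}" for u
    unfolding a_vec_def Let_def
    by (intro tendsto_intros GX GP u) auto
  have L': "(\<lambda>n. a_vec n u w) \<longlonglongrightarrow> (1 - lam) *\<^sub>R G u xs" if u: "u \<in> {1..N}" for u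
    using L[OF u] c0 by (simp add: algebra_simps)
  have "(\<lambda>n. (1/real N) * (\<Sum>u=1..N. a_vec n u w $ i * a_vec n u w $ j))
     \<longlonglongrightarrow> (1/real N) * (\<Sum>u=1..N. ((1 - lam) *\<^sub>R G u xs) $ i * ((1 - lam) *\<^sub>R G u xs) $ j)"
    by (intro tendsto_intros L') auto
  also have "(1/real N) * (\<Sum>u=1..N. ((1 - lam) *\<^sub>R G u xs) $ i * ((1 - lam) *\<^sub>R G u xs) $ j)
      = (1 - lam)\<^sup>2 * ((1 / real N) * (\<Sum>k=1..N. G k xs $ i * G k xs $ j))"
  proof -
    have "(\<Sum>u=1..N. ((1 - lam) *\<^sub>R G u xs) $ i * ((1 - lam) *\<^sub>R G u xs) $ j)
        = (\<Sum>u=1..N. (1 - lam)\<^sup>2 * (G u xs $ i * G u xs $ j))"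
      by (rule sum.cong) (simp_all add: power2_eq_square mult_ac)
    also have "\<dots> = (1 - lam)\<^sup>2 * (\<Sum>u=1..N. G u xs $ i * G u xs $ j)"
      by (rule sum_distrib_left[symmetric])
    finally show ?thesis by simp

  qed
  finally show ?thesis .
qed

end


theorem mainTheorem4:
  fixes M :: "'a measure"
    and f :: "nat \<Rightarrow> real^'d \<Rightarrow> real"
    and G :: "nat \<Rightarrow> real^'d \<Rightarrow> real^'d"
    and N :: nat and lam :: real and gam :: "nat \<Rightarrow> real"
    and X0 X1 :: "'a \<Rightarrow> real^'d"
    and U :: "nat \<Rightarrow> 'a \<Rightarrow> nat"
    and xstar :: "real^'d"
  assumes P: "prob_space M"
    and N: "N \<ge> 1"
    and lam: "0 \<le> lam" "lam \<le> 1"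
    and gam: "\<And>n. n \<ge> 1 \<Longrightarrow> gam n > 0"
    and grad: "\<And>k x. k \<in> {1..N} \<Longrightarrow> GDERIV (f k) x :> G k x"
    and grad_cont: "\<And>k. k \<in> {1..N} \<Longrightarrow> continuous_on UNIV (G k)"
    and X0_meas: "X0 \<in> borel_measurable M"
    and X1_meas: "X1 \<in> borel_measurable M"
    and X0_sq: "integrable M (\<lambda>w. (norm (X0 w))\<^sup>2)"
    and X1_sq: "integrable M (\<lambda>w. (norm (X1 w))\<^sup>2)"
    and U_meas: "\<And>n. n \<ge> 2 \<Longrightarrow> U n \<in> measurable M (count_space {1..N})"
    and U_unif: "\<And>n k. n \<ge> 2 \<Longrightarrow> k \<in> {1..N} \<Longrightarrow>
                   measure M {w \<in> space M. U n w = k} = 1 / real N"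
    and indep: "prob_space.indep_sets M
        (\<lambda>i. if i = 0 then {(\<lambda>w. (X0 w, X1 w)) -` A \<inter> space M | A. A \<in> sets borel}
              else {U i -` A \<inter> space M | A. A \<in> sets (count_space UNIV)})
        (insert 0 {2..})"
    and crit: "GDERIV (\<lambda>x. (1 / real N) * (\<Sum>k=1..N. f k x)) xstar :> 0"
    and conv: "AE w in M. (\<lambda>n. saga_X G N lam gam X0 X1 U n w) \<longlonglongrightarrow> xstar"
  shows
    \<comment> \<open>(eps_n) is a martingale difference sequence w.r.t. (F_n): eps_(n+1) is
        F_(n+1)-measurable and E[eps_(n+1) | F_n] = 0 (componentwise), n >= 1\<close>
    "(\<forall>n\<ge>1. saga_eps G N lam gam X0 X1 U n
               \<in> borel_measurable (saga_filt M X0 X1 U (n + 1))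
           \<and> (\<forall>i. AE w in M. real_cond_exp M (saga_filt M X0 X1 U n)
                   (\<lambda>w. saga_eps G N lam gam X0 X1 U n w $ i) w = 0))
     \<and> (\<forall>k\<in>{1..N}. AE w in M.
           (\<lambda>n. saga_phi G N lam gam X0 X1 U n k w) \<longlonglongrightarrow> xstar)
     \<and> (AE w in M. \<forall>i j.
           (\<lambda>n. real_cond_exp M (saga_filt M X0 X1 U n)
               (\<lambda>w. saga_eps G N lam gam X0 X1 U n w $ i
                    * saga_eps G N lam gam X0 X1 U n w $ j) w)
           \<longlonglongrightarrow> (1 - lam)\<^sup>2 * ((1 / real N) * (\<Sum>k=1..N. G k xstar $ i * G k xstar $ j)))"
  proof -
  interpret S: saga_loc M G N lam gam X0 X1 U
    using P N grad_cont X0_meas X1_meas U_meas U_unif indep by (simp add: saga_loc_def)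
  have c0: "(\<Sum>k=1..N. G k xstar) = 0"
  proof -
    have d: "((\<lambda>x. (1 / real N) * (\<Sum>k=1..N. f k x)) has_derivative
        (\<lambda>h. (1 / real N) * (\<Sum>k=1..N. h \<bullet> G k xstar))) (at xstar)"
      using grad unfolding gderiv_def
      by (intro has_derivative_mult_right has_derivative_sum) auto
    have d0: "((\<lambda>x. (1 / real N) * (\<Sum>k=1..N. f k x)) has_derivative (\<lambda>h. h \<bullet> 0)) (at xstar)"
      using crit unfolding gderiv_def .
    have "(\<lambda>h. (1 / real N) * (\<Sum>k=1..N. h \<bullet> G k xstar)) = (\<lambda>h. h \<bullet> (0::real^'d))"
      by (rule has_derivative_unique[OF d d0])
    then have "(1 / real N) * (\<Sum>k=1..N. (\<Sum>k=1..N. G k xstar) \<bullet> G k xstar) = 0"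
      by (metis inner_zero_right)
    then have "(\<Sum>k=1..N. G k xstar) \<bullet> (\<Sum>k=1..N. G k xstar) = 0"
      using N by (simp add: inner_sum_right)
    then show ?thesis by simp
  qed
  have part1: "\<forall>n\<ge>1. saga_eps G N lam gam X0 X1 U n
               \<in> borel_measurable (saga_filt M X0 X1 U (n + 1))
           \<and> (\<forall>i. AE w in M. real_cond_exp M (saga_filt M X0 X1 U n)
                   (\<lambda>w. saga_eps G N lam gam X0 X1 U n w $ i) w = 0)"
    using S.eps_F S.cond1 by auto
  have part2: "\<forall>k\<in>{1..N}. AE w in M.
           (\<lambda>n. saga_phi G N lam gam X0 X1 U n k w) \<longlonglongrightarrow> xstar"
  proof
    fix k assume k: "k \<in> {1..N}"
    show "AE w in M. (\<lambda>n. saga_phi G N lam gam X0 X1 U n k w) \<longlonglongrightarrow> xstar"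
      using S.io[OF k] conv by eventually_elim (rule S.phi_conv)
  qed
  have pc: "AE w in M. \<forall>k\<in>{1..N}. (\<lambda>n. saga_phi G N lam gam X0 X1 U n k w) \<longlonglongrightarrow> xstar"
    using part2 by (subst AE_ball_countable) auto
  have ce: "AE w in M. \<forall>n. \<forall>i j. 1 \<le> n \<longrightarrow> real_cond_exp M (saga_filt M X0 X1 U n)
   (\<lambda>w. saga_eps G N lam gam X0 X1 U n w $ i * saga_eps G N lam gam X0 X1 U n w $ j) w
     = (1/real N) * (\<Sum>u=1..N. S.a_vec n u w $ i * S.a_vec n u w $ j)"
  proof (subst AE_all_countable, intro allI)
    fix n :: nat
    show "AE w in M. \<forall>i j. 1 \<le> n \<longrightarrow> real_cond_exp M (saga_filt M X0 X1 U n)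
   (\<lambda>w. saga_eps G N lam gam X0 X1 U n w $ i * saga_eps G N lam gam X0 X1 U n w $ j) w
     = (1/real N) * (\<Sum>u=1..N. S.a_vec n u w $ i * S.a_vec n u w $ j)"
    proof (cases "1 \<le> n")
      case True
      show ?thesis
        by (subst AE_all_countable, intro allI, subst AE_all_countable, intro allI)
           (use S.cond2[OF True] in auto)
    qed simp
  qed
  have part3: "AE w in M. \<forall>i j.
           (\<lambda>n. real_cond_exp M (saga_filt M X0 X1 U n)
               (\<lambda>w. saga_eps G N lam gam X0 X1 U n w $ i
                    * saga_eps G N lam gam X0 X1 U n w $ j) w)
           \<longlonglongrightarrow> (1 - lam)\<^sup>2 * ((1 / real N) * (\<Sum>k=1..N. G k xstar $ i * G k xstar $ j))"
    using conv pc ce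
  proof eventually_elim
    case (elim w)
    show ?case
    proof (intro allI)
      fix i j
      have ev: "eventually (\<lambda>n. (1/real N) * (\<Sum>u=1..N. S.a_vec n u w $ i * S.a_vec n u w $ j) =
          real_cond_exp M (saga_filt M X0 X1 U n)
               (\<lambda>w. saga_eps G N lam gam X0 X1 U n w $ i
                    * saga_eps G N lam gam X0 X1 U n w $ j) w) sequentially"
        using elim(3) by (intro eventually_sequentiallyI[of 1]) auto
      show "(\<lambda>n. real_cond_exp M (saga_filt M X0 X1 U n)
               (\<lambda>w. saga_eps G N lam gam X0 X1 U n w $ i
                    * saga_eps G N lam gam X0 X1 U n w $ j) w)
           \<longlonglongrightarrow> (1 - lam)\<^sup>2 * ((1 / real N) * (\<Sum>k=1..N. G k xstar $ i * G k xstar $ j))"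
        using S.lim3[OF elim(1) _ c0, of i j] elim(2) tendsto_cong[OF ev] by auto
    qed
  qed
  show ?thesis using part1 part2 part3 by blast
qed

end
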